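(* Consider the RETAS (renewal epidemic-type aftershock sequence) model described in the context, observed on $[0,T]\times\mathcal{S}\times\mathcal{M}$ with events $(\tau_i,x_i,y_i,m_i)$, $i=1,\dots,n$, $0<\tau_1<\dots<\tau_n\le T$, and write $s_i=(x_i,y_i)$. Define $d_1=\mu(\tau_1)\nu(s_1)\exp\!\big(-\int_0^{\tau_1}\mu(t)\,\mathrm{d}t\big)$; for $i=2,\dots,n$ and $j=1,\dots,i-1$, $S_{ij}=\exp\!\big(-\int_{\tau_{i-1}}^{\tau_i}\mu(t-\tau_j)\,\mathrm{d}t\big)$ and $d_{ij}=\big(\mu(\tau_i-\tau_j)\nu(s_i)+\phi(\tau_i,s_i)\big)S_{ij}$; for $j=1,\dots,n$, $S_{n+1,j}=\exp\!\big(-\int_{\tau_n}^{T}\mu(t-\tau_j)\,\mathrm{d}t\big)$; and $\Phi(T)=\int_0^T\iint_{\mathcal{S}}\phi(t,x,y)\,\mathrm{d}x\,\mathrm{d}y\,\mathrm{d}t=\sum_{j=1}^n\kappa(m_j)\int_{\tau_j}^T g(t-\tau_j)\,\mathrm{d}t\iint_{\mathcal{S}}f(x-x_j,y-y_j)\,\mathrm{d}x\,\mathrm{d}y$. Let $p_{ij}=\mathbb{P}(I(\tau_i)=j\mid\mathcal{H}_{\tau_i-})$ for $2\le i\le n$, and $p_{n+1,j}=\mathbb{P}(I(\tau_{n+1})=j\mid \mathcal{H}_T)$, where $\tau_{n+1}$ is the first event time after $T$. Then the log-likelihood of the observed data is $$\ell(\theta)=\log d_1+\sum_{i=2}^n\log\Big(\sum_{j=1}^{i-1}p_{ij}d_{ij}\Big)+\log\Big(\sum_{j=1}^n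 p_{n+1,j}S_{n+1,j}\Big)-\Phi(T)+\sum_{j=1}^n\log J(m_j),$$ and the probabilities $p_{ij}$ are computed recursively from $p_{21}=1$ by, for $i\ge 3$, $$p_{ij}=\frac{p_{i-1,j}\,\phi(\tau_{i-1},s_{i-1})\,S_{i-1,j}}{\sum_{k=1}^{i-2}p_{i-1,k}d_{i-1,k}},\quad j=1,\dots,i-2,\qquad p_{i,i-1}=1-\sum_{k=1}^{i-2}p_{ik}.$$
   Context: The RETAS model is a marked spatiotemporal point process of earthquakes $(\tau_i,x_i,y_i,m_i)_{i\ge1}$ (time, location in $\mathcal{S}\subset\mathbb{R}^2$, magnitude in $\mathcal{M}\subset\mathbb{R}$). Let $\mathcal{H}_t=\sigma\{(\tau_i,x_i,y_i,m_i):\tau_i\le t\}$ be the internal history. Each event carries an unobserved indicator $B_i\in\{0,1\}$ ($B_i=0$: main-shock, $B_i=1$: aftershock); $I(t)=\max\{i:\tau_i<t,B_i=0\}$ is the index of the most recent main-shock before $t$, with $I(t)=0$ for $t\le\tau_1$ and $\tau_0=0$. It is assumed there are no events before time $0$ and the first event is a main-shock. With respect to the extended history $\tilde{\mathcal{H}}_t=\sigma(\mathcal{H}_t\cup\{I(s):s\le t\})$, the conditional intensity is $\lambda(t,x,y,m)=\tilde\lambda_g(t,x,y)J(m)$ with ground intensity $$\tilde\lambda_g(t,x,y)=\mu(t-\tau_{I(t)})\nu(x,y)+\phi(t,x,y),\qquad \phi(t,x,y)=\sum_{i:\tau_i<t}\kappa(m_i)g(t-\tau_i)f(x-x_i,y-y_i).$$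 Here $\mu\ge0$ is the hazard function of the i.i.d. waiting times between consecutive main-shocks (so main-shock times form a renewal process), with $\int_0^\infty\exp(-\int_0^t\mu(s)\,\mathrm{d}s)\,\mathrm{d}t<\infty$; $\nu\ge0$ is a density on $\mathcal{S}$ (integrating to 1) for main-shock locations; $g\ge0$ is a probability density on $[0,\infty)$ (temporal response); $f\ge0$ is a probability density on $\mathbb{R}^2$ (spatial response); $\kappa(m)\ge0$ is the mean number of aftershocks directly triggered by an event of magnitude $m$; and magnitudes are i.i.d. with density $J$, independent of times, locations, and the past. $\theta$ denotes the vector of all model parameters on which $\mu,\nu,g,f,\kappa,J$ depend. The log-likelihood is that of the observed data $(\tau_i,s_i,m_i)_{i=1}^n$ on $[0,T]$. *)

theory Defs
  imports "HOL-Analysis.Analysis"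
begin

record retas_model =
  mu    :: "real \<Rightarrow> real"              (* hazard of main-shock waiting times *)
  nu    :: "real \<times> real \<Rightarrow> real"     (* main-shock location density on S *)
  gg    :: "real \<Rightarrow> real"              (* temporal response density on [0,oo) *)
  ff    :: "real \<times> real \<Rightarrow> real"     (* spatial response density on R^2 *)
  kap   :: "real \<Rightarrow> real"              (* productivity kappa(m) *)
  JJ    :: "real \<Rightarrow> real"              (* magnitude density J *)

text \<open>Observed data: events i = 1..nn with times tt i, locations ss i, magnitudes mm i,
  observation window [0, TT].  The convention tau_0 = 0 is imposed as a hypothesis.\<close>
record retas_data =
  tt :: "nat \<Rightarrow> real"
  ss :: "nat \<Rightarrow> real \<times> real"
  mm :: "nat \<Rightarrow> real"
  nn :: nat
  TT :: real

definition phi :: "retas_model \<Rightarrow> retas_data \<Rightarrow> real \<Rightarrow> real \<times> real \<Rightarrow> real" where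
  "phi P D t p = (\<Sum>i | i \<in> {1..nn D} \<and> tt D i < t.
      kap P (mm D i) * gg P (t - tt D i) * ff P (p - ss D i))"

text \<open>Index I(t) of the most recent main-shock before t, for a set A of main-shock indices
  (0 if there is none).\<close>
definition mainIdx :: "retas_data \<Rightarrow> nat set \<Rightarrow> real \<Rightarrow> nat" where
  "mainIdx D A t = Max (insert 0 {i \<in> A. tt D i < t})"

text \<open>Admissible main-shock index sets for the first k events (event 1 is a main-shock).\<close>
definition labels :: "nat \<Rightarrow> nat set set" where
  "labels k = {A. A \<subseteq> {1..k} \<and> 1 \<in> A}"

text \<open>Ground intensity of event l under the complete (labelled) data.\<close>
definition fac :: "retas_model \<Rightarrow> retas_data \<Rightarrow> nat set \<Rightarrow> nat \<Rightarrow> real" where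
  "fac P D A l = (if l \<in> A
      then mu P (tt D l - tt D (mainIdx D A (tt D l))) * nu P (ss D l)
      else phi P D (tt D l) (ss D l))"

definition Phi :: "retas_model \<Rightarrow> retas_data \<Rightarrow> (real \<times> real) set \<Rightarrow> real \<Rightarrow> nat \<Rightarrow> real" where
  "Phi P D Sp u k = (\<Sum>j = 1..k. kap P (mm D j) * integral {tt D j..u} (\<lambda>t. gg P (t - tt D j))
        * integral Sp (\<lambda>p. ff P (p - ss D j)))"

definition Lam0 :: "retas_model \<Rightarrow> retas_data \<Rightarrow> (real \<times> real) set \<Rightarrow> nat set \<Rightarrow> real \<Rightarrow> real" where
  "Lam0 P D Sp A u = integral {0..u} (\<lambda>t. mu P (t - tt D (mainIdx D A t))) * integral Sp (nu P)"

definition Lcomp :: "retas_model \<Rightarrow> retas_data \<Rightarrow> (real \<times> real) set \<Rightarrow> nat \<Rightarrow> real \<Rightarrow> nat set \<Rightarrow> real" where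
  "Lcomp P D Sp k u A = (\<Prod>l = 1..k. fac P D A l * JJ P (mm D l))
      * exp (- (Lam0 P D Sp A u + Phi P D Sp u k))"

text \<open>Likelihood of the observed data on [0,T]: complete-data likelihood marginalised over
  the unobserved main-shock/aftershock labels; log-likelihood ell(theta).\<close>
definition obsLik :: "retas_model \<Rightarrow> retas_data \<Rightarrow> (real \<times> real) set \<Rightarrow> real" where
  "obsLik P D Sp = (\<Sum>A \<in> labels (nn D). Lcomp P D Sp (nn D) (TT D) A)"

definition loglik :: "retas_model \<Rightarrow> retas_data \<Rightarrow> (real \<times> real) set \<Rightarrow> real" where
  "loglik P D Sp = ln (obsLik P D Sp)"

text \<open>p_{ij} = P(I(tau_i) = j | history of events 1..i-1), for 2 <= i <= n+1: the posterior of
  the labels of events 1..i-1 given the data up to tau_{i-1}.  Given main-shock set A of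
  events 1..i-1, I(tau_i) = Max A.\<close>
definition pp :: "retas_model \<Rightarrow> retas_data \<Rightarrow> (real \<times> real) set \<Rightarrow> nat \<Rightarrow> nat \<Rightarrow> real" where
  "pp P D Sp i j =
     (\<Sum>A | A \<in> labels (i - 1) \<and> Max A = j. Lcomp P D Sp (i - 1) (tt D (i - 1)) A)
     / (\<Sum>A \<in> labels (i - 1). Lcomp P D Sp (i - 1) (tt D (i - 1)) A)"

definition d1 :: "retas_model \<Rightarrow> retas_data \<Rightarrow> real" where
  "d1 P D = mu P (tt D 1) * nu P (ss D 1) * exp (- integral {0..tt D 1} (mu P))"

definition Ssurv :: "retas_model \<Rightarrow> retas_data \<Rightarrow> nat \<Rightarrow> nat \<Rightarrow> real" where
  "Ssurv P D i j = exp (- integral {tt D (i - 1)..tt D i} (\<lambda>t. mu P (t - tt D j)))"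

definition dd :: "retas_model \<Rightarrow> retas_data \<Rightarrow> nat \<Rightarrow> nat \<Rightarrow> real" where
  "dd P D i j = (mu P (tt D i - tt D j) * nu P (ss D i) + phi P D (tt D i) (ss D i)) * Ssurv P D i j"

definition Send :: "retas_model \<Rightarrow> retas_data \<Rightarrow> nat \<Rightarrow> real" where
  "Send P D j = exp (- integral {tt D (nn D)..TT D} (\<lambda>t. mu P (t - tt D j)))"

end

theory Submission
  imports Defs
begin

lemma shift_integrable:
  fixes f :: "real \<Rightarrow> real"
  assumes "\<And>b. f integrable_on {0..b}" "c \<le> a"
  shows "(\<lambda>x. f (x - c)) integrable_on {a..b}"
proof -
  have "f integrable_on {a - c..b - c}"
    using integrable_on_subinterval[OF assms(1)[of "b - c"]] assms(2)
    by (cases "a \<le> b") auto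
  then obtain i where "(f has_integral i) (cbox (a - c) (b - c))" by auto
  from has_integral_affinity'[OF this, of 1 "- c"]
  have "((\<lambda>x. f (x - c)) has_integral i) (cbox a b)" by simp
  then show ?thesis by auto
qed

locale retas =
  fixes P :: retas_model and D :: retas_data and Sp :: "(real \<times> real) set"
  assumes n_pos: "1 \<le> nn D"
    and tau0: "tt D 0 = 0"
    and tau1_pos: "0 < tt D 1"
    and tau_mono: "\<And>i. 1 \<le> i \<Longrightarrow> i < nn D \<Longrightarrow> tt D i < tt D (Suc i)"
    and s_in: "\<And>i. 1 \<le> i \<Longrightarrow> i \<le> nn D \<Longrightarrow> ss D i \<in> Sp"
    and mu_nonneg: "\<And>t. 0 \<le> t \<Longrightarrow> 0 \<le> mu P t"
    and mu_locint: "\<And>b. mu P integrable_on {0..b}"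
    and nu_nonneg: "\<And>p. p \<in> Sp \<Longrightarrow> 0 \<le> nu P p"
    and nu_dens: "(nu P has_integral 1) Sp"
    and g_nonneg: "\<And>t. 0 \<le> t \<Longrightarrow> 0 \<le> gg P t"
    and f_nonneg: "\<And>p. 0 \<le> ff P p"
    and kappa_nonneg: "\<And>x. 0 \<le> kap P x"
begin

lemma t_step: "Suc b \<le> nn D \<Longrightarrow> tt D b < tt D (Suc b)"
  using tau0 tau1_pos tau_mono[of b] by (cases "b = 0") auto

lemma t_strict: "a < b \<Longrightarrow> b \<le> nn D \<Longrightarrow> tt D a < tt D b"
proof (induction b)
  case 0 then show ?case by simp
next
  case (Suc b)
  have s: "tt D b < tt D (Suc b)" using t_step Suc.prems by simp
  show ?case
  proof (cases "a = b")
    case True then show ?thesis using s by simp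
  next
    case False then show ?thesis using Suc s by auto
  qed
qed

lemma t_mono: "a \<le> b \<Longrightarrow> b \<le> nn D \<Longrightarrow> tt D a \<le> tt D b"
  using t_strict[of a b] by (cases "a = b") auto

lemma t_nonneg: "i \<le> nn D \<Longrightarrow> 0 \<le> tt D i"
  using t_mono[of 0 i] tau0 by simp

lemma labels_sub: "labels k \<subseteq> Pow {1..k}"
  unfolding labels_def by auto

lemma labels_fin: "finite (labels k)"
  using labels_sub finite_subset by (metis finite_Pow_iff finite_atLeastAtMost)

lemma labelsD:
  assumes "A \<in> labels k"
  shows "finite A" "A \<noteq> {}" "Max A \<in> A" "1 \<le> Max A" "Max A \<le> k" "1 \<in> A" "A \<subseteq> {1..k}"
proof -
  have A: "A \<subseteq> {1..k}" "1 \<in> A" using assms unfolding labels_def by auto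
  show f: "finite A" using A finite_subset by blast
  show ne: "A \<noteq> {}" using A by auto
  show "Max A \<in> A" using f ne by simp
  then show "1 \<le> Max A" "Max A \<le> k" using A by auto
  show "1 \<in> A" "A \<subseteq> {1..k}" using A by auto
qed

lemma mainIdx_after:
  assumes "A \<in> labels k" "k \<le> nn D" "tt D k < x"
  shows "mainIdx D A x = Max A"
proof -
  have "{i \<in> A. tt D i < x} = A"
  proof -
    have "tt D i < x" if "i \<in> A" for i
      using labelsD(7)[OF assms(1)] that t_mono[of i k] assms by force
    then show ?thesis by auto
  qed
  then show ?thesis unfolding mainIdx_def
    using labelsD[OF assms(1)] by (simp add: Max_insert)
qed

lemma mainIdx_before:
  assumes "B \<subseteq> {1..nn D}" "k \<le> nn D" "x \<le> tt D k"
  shows "mainIdx D B x = mainIdx D (B \<inter> {..<k}) x"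
proof -
  have "{i \<in> B. tt D i < x} = {i \<in> B \<inter> {..<k}. tt D i < x}"
  proof -
    have "i < k" if "i \<in> B" "tt D i < x" for i
    proof (rule ccontr)
      assume "\<not> i < k"
      then have "tt D k \<le> tt D i" using t_mono[of k i] that assms by auto
      then show False using that assms by simp
    qed
    then show ?thesis by auto
  qed
  then show ?thesis unfolding mainIdx_def by simp
qed

lemma mainIdx_range:
  assumes "finite B"
  shows "mainIdx D B x \<in> insert 0 {i \<in> B. tt D i < x}"
  unfolding mainIdx_def using assms by (intro Max_in) auto

lemma labels_one: "labels 1 = {{1}}"
  unfolding labels_def by auto

lemma labels_Suc:
  assumes "1 \<le> m"
  shows "labels (Suc m) = labels m \<union> insert (Suc m) ` labels m"
proof
  show "labels (Suc m) \<subseteq> labels m \<union> insert (Suc m) ` labels m"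
  proof
    fix A assume A: "A \<in> labels (Suc m)"
    show "A \<in> labels m \<union> insert (Suc m) ` labels m"
    proof (cases "Suc m \<in> A")
      case True
      then have "A = insert (Suc m) (A - {Suc m})" by auto
      moreover have "A - {Suc m} \<in> labels m" using A assms unfolding labels_def by auto
      ultimately show ?thesis by blast
    next
      case False
      have "A \<subseteq> {1..m}"
      proof
        fix x assume "x \<in> A"
        then have "x \<in> {1..Suc m}" "x \<noteq> Suc m" using A False unfolding labels_def by auto
        then show "x \<in> {1..m}" by auto
      qed
      then have "A \<in> labels m" using A unfolding labels_def by auto
      then show ?thesis by blast
    qed
  qed
next
  show "labels m \<union> insert (Suc m) ` labels m \<subseteq> labels (Suc m)"
    unfolding labels_def by auto
qed

lemma labels_disj: "labels m \<inter> insert (Suc m) ` labels m = {}"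
  unfolding labels_def by auto

lemma labels_inj: "inj_on (insert (Suc m)) (labels m)"
proof (rule inj_onI)
  fix x y assume "x \<in> labels m" "y \<in> labels m" "insert (Suc m) x = insert (Suc m) y"
  moreover have "Suc m \<notin> x" "Suc m \<notin> y" using calculation unfolding labels_def by auto
  ultimately show "x = y" by (metis Diff_insert_absorb)
qed

lemma sum_labels_Suc:
  assumes "1 \<le> m"
  shows "(\<Sum>A\<in>labels (Suc m). F A) = (\<Sum>A\<in>labels m. F A + F (insert (Suc m) A))"
proof -
  have "(\<Sum>A\<in>labels (Suc m). F A) = (\<Sum>A\<in>labels m. F A) + (\<Sum>A\<in>insert (Suc m) ` labels m. F A)"
    unfolding labels_Suc[OF assms] using labels_disj labels_fin
    by (intro sum.union_disjoint) auto
  also have "(\<Sum>A\<in>insert (Suc m) ` labels m. F A) = (\<Sum>A\<in>labels m. F (insert (Suc m) A))"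
    using labels_inj by (simp add: sum.reindex)
  finally show ?thesis by (simp add: sum.distrib)
qed

end

context retas begin

definition hh :: "nat set \<Rightarrow> real \<Rightarrow> real" where
  "hh A x = mu P (x - tt D (mainIdx D A x))"

lemma hh_lam: "hh A = (\<lambda>x. mu P (x - tt D (mainIdx D A x)))"
  by (rule ext) (simp add: hh_def)

lemma nu_int: "integral Sp (nu P) = 1"
  using nu_dens by (rule integral_unique)

lemma Lam0_eq: "Lam0 P D Sp A u = integral {0..u} (hh A)"
  unfolding Lam0_def nu_int hh_lam by simp

lemma h_rest:
  assumes A: "A \<in> labels k" "1 \<le> k" "k \<le> nn D" "tt D k \<le> u"
    and I: "hh A integrable_on {0..tt D k}"
  shows "hh A integrable_on {0..u}"
    and "integral {0..u} (hh A) = integral {0..tt D k} (hh A)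
           + integral {tt D k..u} (\<lambda>x. mu P (x - tt D (Max A)))"
proof -
  have c: "tt D (Max A) \<le> tt D k" using t_mono labelsD[OF A(1)] A by auto
  have S: "(\<lambda>x. mu P (x - tt D (Max A))) integrable_on {tt D k..u}"
    using shift_integrable[OF mu_locint c] .
  have eq: "hh A x = mu P (x - tt D (Max A))" if "x \<in> {tt D k..u} - {tt D k}" for x
    using that mainIdx_after[OF A(1) A(3)] by (simp add: hh_def)
  have H: "hh A integrable_on {tt D k..u}"
    using integrable_spike[OF S negligible_sing eq] .
  have E: "integral {tt D k..u} (hh A) = integral {tt D k..u} (\<lambda>x. mu P (x - tt D (Max A)))"
    by (rule integral_spike[OF negligible_sing[of "tt D k"], where T="{tt D k..u}"]) (use eq in auto)
  have z: "0 \<le> tt D k" using t_nonneg A by simp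
  show "hh A integrable_on {0..u}"
    using Henstock_Kurzweil_Integration.integrable_combine[OF z A(4) I H] .
  then show "integral {0..u} (hh A) = integral {0..tt D k} (hh A)
           + integral {tt D k..u} (\<lambda>x. mu P (x - tt D (Max A)))"
    using Henstock_Kurzweil_Integration.integral_combine[OF z A(4), of "hh A"] E by simp
qed

lemma h_int: "1 \<le> k \<Longrightarrow> k \<le> nn D \<Longrightarrow> A \<in> labels k \<Longrightarrow> hh A integrable_on {0..tt D k}"
proof (induction k arbitrary: A)
  case 0 then show ?case by simp
next
  case (Suc m)
  show ?case
  proof (cases "m = 0")
    case True
    then have A: "A = {1}" using Suc.prems labels_one by auto
    have "hh A x = mu P x" if "x \<in> {0..tt D (Suc m)}" for x
    proof -
      have e: "{i \<in> A. tt D i < x} = {}" using A that True by auto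
      show ?thesis unfolding hh_def mainIdx_def e by (simp add: tau0)
    qed
    then show ?thesis using integrable_eq[OF mu_locint, of "tt D (Suc m)" "hh A"] by auto
  next
    case False
    then have m1: "1 \<le> m" by simp
    define B where "B = A \<inter> {..<Suc m}"
    have AB: "A \<in> labels m \<or> A \<in> insert (Suc m) ` labels m"
      using Suc.prems labels_Suc[OF m1] by auto
    have B: "B \<in> labels m" and BB: "B \<inter> {..<Suc m} = B"
    proof -
      from AB show "B \<in> labels m"
      proof
        assume "A \<in> labels m"
        moreover then have "B = A" unfolding B_def labels_def by auto
        ultimately show ?thesis by simp
      next
        assume "A \<in> insert (Suc m) ` labels m"
        then obtain C where C: "C \<in> labels m" "A = insert (Suc m) C" by auto
        then have "B = C" unfolding B_def labels_def by auto
        then show ?thesis using C by simp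
      qed
      then show "B \<inter> {..<Suc m} = B" unfolding labels_def by auto
    qed
    have Asub: "A \<subseteq> {1..nn D}" using Suc.prems labelsD(7) by force
    have Bsub: "B \<subseteq> {1..nn D}" using Asub B_def by auto
    have eq: "hh B x = hh A x" if "x \<in> {0..tt D (Suc m)}" for x
      using mainIdx_before[OF Asub Suc.prems(2), of x] mainIdx_before[OF Bsub Suc.prems(2), of x]
        that B_def BB by (simp add: hh_def)
    have IH: "hh B integrable_on {0..tt D m}" using Suc.IH[OF m1 _ B] Suc.prems by simp
    have "hh B integrable_on {0..tt D (Suc m)}"
      using h_rest(1)[OF B m1 _ _ IH] Suc.prems t_mono[of m "Suc m"] by simp
    then show ?thesis using integrable_eq eq by blast
  qed
qed

end

context retas begin

lemma exp_neg_add: "exp (- (a + b)) = exp (- a) * exp (- (b::real))"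
  by (simp add: exp_add[symmetric])

definition Rf :: "nat \<Rightarrow> real \<Rightarrow> nat set \<Rightarrow> real" where
  "Rf k u A = (\<Prod>l = 1..k. fac P D A l) * exp (- Lam0 P D Sp A u)"

lemma Lcomp_eq:
  "Lcomp P D Sp k u A = ((\<Prod>l = 1..k. JJ P (mm D l)) * exp (- Phi P D Sp u k)) * Rf k u A"
proof -
  have e: "exp (- (a + b)) = exp (- a) * exp (- b)" for a b :: real
    by (simp add: exp_add[symmetric])
  show ?thesis unfolding Lcomp_def Rf_def e prod.distrib by (simp add: algebra_simps)
qed

lemma hh_restrict:
  assumes "B \<subseteq> {1..nn D}" "k \<le> nn D" "x \<le> tt D k"
  shows "hh B x = hh (B \<inter> {..<k}) x"
  using mainIdx_before[OF assms] by (simp add: hh_def)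

lemma Lam0_end:
  assumes "A \<in> labels k" "1 \<le> k" "k \<le> nn D" "tt D k \<le> u"
  shows "Lam0 P D Sp A u = Lam0 P D Sp A (tt D k) + integral {tt D k..u} (\<lambda>x. mu P (x - tt D (Max A)))"
  unfolding Lam0_eq using h_rest(2)[OF assms h_int[OF assms(2,3,1)]] .

lemma restrict_A:
  assumes "A \<in> labels m" "B = A \<or> B = insert (Suc m) A"
  shows "B \<inter> {..<Suc m} = A" "A \<inter> {..<Suc m} = A"
  using assms unfolding labels_def by auto

lemma Lam0_step:
  assumes m: "1 \<le> m" "Suc m \<le> nn D" and A: "A \<in> labels m" and B: "B = A \<or> B = insert (Suc m) A"
  shows "Lam0 P D Sp B (tt D (Suc m)) = Lam0 P D Sp A (tt D m)
           + integral {tt D m..tt D (Suc m)} (\<lambda>x. mu P (x - tt D (Max A)))"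
proof -
  have Bsub: "B \<subseteq> {1..nn D}" using B labelsD(7)[OF A] m by auto
  have Asub: "A \<subseteq> {1..nn D}" using labelsD(7)[OF A] m by auto
  have "integral {0..tt D (Suc m)} (hh B) = integral {0..tt D (Suc m)} (hh A)"
  proof (rule integral_cong)
    fix x assume "x \<in> {0..tt D (Suc m)}"
    then have "x \<le> tt D (Suc m)" by simp
    then have "hh B x = hh (B \<inter> {..<Suc m}) x"
      by (rule hh_restrict[OF Bsub m(2)])
    then show "hh B x = hh A x"
      using restrict_A[OF A B] by simp
  qed
  then have "Lam0 P D Sp B (tt D (Suc m)) = Lam0 P D Sp A (tt D (Suc m))"
    unfolding Lam0_eq .
  also have "\<dots> = Lam0 P D Sp A (tt D m) + integral {tt D m..tt D (Suc m)} (\<lambda>x. mu P (x - tt D (Max A)))"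
    by (rule Lam0_end[OF A m(1)]) (use m t_mono[of m "Suc m"] in auto)
  finally show ?thesis .
qed

lemma fac_step:
  assumes m: "1 \<le> m" "Suc m \<le> nn D" and A: "A \<in> labels m" and B: "B = A \<or> B = insert (Suc m) A"
    and l: "1 \<le> l" "l \<le> m"
  shows "fac P D B l = fac P D A l"
proof -
  have Bsub: "B \<subseteq> {1..nn D}" using B labelsD(7)[OF A] m by auto
  have "tt D l \<le> tt D (Suc m)" using t_mono l m by simp
  then have "mainIdx D B (tt D l) = mainIdx D (B \<inter> {..<Suc m}) (tt D l)"
    by (rule mainIdx_before[OF Bsub m(2)])
  then have "mainIdx D B (tt D l) = mainIdx D A (tt D l)"
    using restrict_A[OF A B] by simp
  moreover have "l \<in> B \<longleftrightarrow> l \<in> A" using B l by auto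
  ultimately show ?thesis unfolding fac_def by simp
qed

lemma prod_step:
  assumes m: "1 \<le> m" "Suc m \<le> nn D" and A: "A \<in> labels m" and B: "B = A \<or> B = insert (Suc m) A"
  shows "(\<Prod>l = 1..Suc m. fac P D B l) = (\<Prod>l = 1..m. fac P D A l) * fac P D B (Suc m)"
proof -
  have "(\<Prod>l = 1..m. fac P D B l) = (\<Prod>l = 1..m. fac P D A l)"
    using fac_step[OF m A B] by (intro prod.cong) auto
  then show ?thesis by (simp add: prod.cl_ivl_Suc)
qed

lemma fac_new_no:
  assumes "A \<in> labels m"
  shows "fac P D A (Suc m) = phi P D (tt D (Suc m)) (ss D (Suc m))"
  using labelsD(7)[OF assms] unfolding fac_def by auto

lemma fac_new_yes:
  assumes m: "1 \<le> m" "Suc m \<le> nn D" and A: "A \<in> labels m"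
  shows "fac P D (insert (Suc m) A) (Suc m) = mu P (tt D (Suc m) - tt D (Max A)) * nu P (ss D (Suc m))"
proof -
  have Bsub: "insert (Suc m) A \<subseteq> {1..nn D}" using labelsD(7)[OF A] m by auto
  have "mainIdx D (insert (Suc m) A) (tt D (Suc m)) = mainIdx D (insert (Suc m) A \<inter> {..<Suc m}) (tt D (Suc m))"
    by (rule mainIdx_before[OF Bsub m(2)]) simp
  also have "\<dots> = mainIdx D A (tt D (Suc m))"
    using restrict_A[OF A] by simp
  also have "\<dots> = Max A" using mainIdx_after[OF A] m t_strict[of m "Suc m"] by simp
  finally show ?thesis unfolding fac_def by simp
qed

lemma Rf_step_no:
  assumes m: "1 \<le> m" "Suc m \<le> nn D" and A: "A \<in> labels m"
  shows "Rf (Suc m) (tt D (Suc m)) A = Rf m (tt D m) A * phi P D (tt D (Suc m)) (ss D (Suc m))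
           * Ssurv P D (Suc m) (Max A)"
proof -
  have p: "(\<Prod>l = 1..Suc m. fac P D A l) = (\<Prod>l = 1..m. fac P D A l) * phi P D (tt D (Suc m)) (ss D (Suc m))"
    using prod_step[OF m A, of A] fac_new_no[OF A] by simp
  have L: "Lam0 P D Sp A (tt D (Suc m)) = Lam0 P D Sp A (tt D m)
           + integral {tt D m..tt D (Suc m)} (\<lambda>x. mu P (x - tt D (Max A)))"
    using Lam0_step[OF m A, of A] by simp
  show ?thesis unfolding Rf_def p L Ssurv_def by (simp only: diff_Suc_1 exp_neg_add mult_ac)
qed

lemma Rf_step_yes:
  assumes m: "1 \<le> m" "Suc m \<le> nn D" and A: "A \<in> labels m"
  shows "Rf (Suc m) (tt D (Suc m)) (insert (Suc m) A) = Rf m (tt D m) A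
           * (mu P (tt D (Suc m) - tt D (Max A)) * nu P (ss D (Suc m)))
           * Ssurv P D (Suc m) (Max A)"
proof -
  have p: "(\<Prod>l = 1..Suc m. fac P D (insert (Suc m) A) l) = (\<Prod>l = 1..m. fac P D A l)
      * (mu P (tt D (Suc m) - tt D (Max A)) * nu P (ss D (Suc m)))"
    using prod_step[OF m A, of "insert (Suc m) A"] fac_new_yes[OF m A] by simp
  have L: "Lam0 P D Sp (insert (Suc m) A) (tt D (Suc m)) = Lam0 P D Sp A (tt D m)
           + integral {tt D m..tt D (Suc m)} (\<lambda>x. mu P (x - tt D (Max A)))"
    using Lam0_step[OF m A, of "insert (Suc m) A"] by simp
  show ?thesis unfolding Rf_def p L Ssurv_def by (simp only: diff_Suc_1 exp_neg_add mult_ac)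
qed

lemma Rf_end:
  assumes A: "A \<in> labels (nn D)" and T: "tt D (nn D) \<le> TT D"
  shows "Rf (nn D) (TT D) A = Rf (nn D) (tt D (nn D)) A * Send P D (Max A)"
  unfolding Rf_def Lam0_end[OF A n_pos order.refl T] Send_def
  by (simp only: exp_neg_add mult_ac)

lemma Rf_one: "Rf 1 (tt D 1) {1} = d1 P D"
proof -
  have mi: "mainIdx D {1} x = 0" if "x \<le> tt D 1" for x
  proof -
    have e: "{i \<in> {1}. tt D i < x} = {}" using that by auto
    show ?thesis unfolding mainIdx_def e by simp
  qed
  have "integral {0..tt D 1} (hh {1}) = integral {0..tt D 1} (mu P)"
  proof (rule integral_cong)
    fix x assume "x \<in> {0..tt D 1}"
    then have "mainIdx D {1} x = 0" using mi by simp
    then show "hh {1} x = mu P x" by (simp add: hh_def tau0)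
  qed
  then show ?thesis
    unfolding Rf_def d1_def Lam0_eq fac_def using mi[of "tt D 1"] tau0 by simp
qed

lemma phi_nonneg: "0 \<le> phi P D x p"
  unfolding phi_def
  by (intro sum_nonneg mult_nonneg_nonneg kappa_nonneg g_nonneg f_nonneg) auto

lemma fac_nonneg:
  assumes "finite A" "1 \<le> l" "l \<le> nn D"
  shows "0 \<le> fac P D A l"
proof (cases "l \<in> A")
  case True
  have "tt D (mainIdx D A (tt D l)) \<le> tt D l"
    using mainIdx_range[OF assms(1), of "tt D l"] tau0 t_nonneg[OF assms(3)] by auto
  then have "0 \<le> mu P (tt D l - tt D (mainIdx D A (tt D l)))" by (intro mu_nonneg) simp
  moreover have "0 \<le> nu P (ss D l)" using nu_nonneg s_in assms by simp
  ultimately show ?thesis using True unfolding fac_def by simp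
next
  case False then show ?thesis unfolding fac_def using phi_nonneg by simp
qed

lemma Rf_nonneg:
  assumes "A \<in> labels k" "k \<le> nn D"
  shows "0 \<le> Rf k u A"
  unfolding Rf_def using fac_nonneg labelsD(1)[OF assms(1)] assms(2)
  by (intro mult_nonneg_nonneg prod_nonneg) auto

end

locale retas2 = retas +
  assumes tau_T: "tt D (nn D) \<le> TT D"
    and J_nonneg: "\<And>x. 0 \<le> JJ P x"
    and lik_pos: "0 < obsLik P D Sp"
begin

definition Y :: "nat \<Rightarrow> real" where
  "Y k = (\<Sum>A\<in>labels k. Rf k (tt D k) A)"

definition N :: "nat \<Rightarrow> nat \<Rightarrow> real" where
  "N k j = (\<Sum>A | A \<in> labels k \<and> Max A = j. Rf k (tt D k) A)"

lemma group_Max: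
  fixes F :: "nat set \<Rightarrow> real" and G :: "nat \<Rightarrow> real"
  shows "(\<Sum>A\<in>labels m. F A * G (Max A)) = (\<Sum>j = 1..m. G j * (\<Sum>A | A \<in> labels m \<and> Max A = j. F A))"
proof -
  have "(\<Sum>A\<in>labels m. F A * G (Max A)) = (\<Sum>j\<in>{1..m}. \<Sum>A\<in>{x \<in> labels m. Max x = j}. F A * G (Max A))"
    by (rule sum.group[symmetric]) (use labels_fin labelsD(4,5) in auto)
  also have "\<dots> = (\<Sum>j = 1..m. G j * (\<Sum>A | A \<in> labels m \<and> Max A = j. F A))"
  proof (intro sum.cong refl)
    fix j
    have "(\<Sum>A\<in>{x \<in> labels m. Max x = j}. F A * G (Max A)) = (\<Sum>A\<in>{x \<in> labels m. Max x = j}. F A * G j)"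
      by (rule sum.cong) auto
    also have "\<dots> = (\<Sum>A\<in>{x \<in> labels m. Max x = j}. F A) * G j"
      by (rule sum_distrib_right[symmetric])
    finally show "(\<Sum>A\<in>{x \<in> labels m. Max x = j}. F A * G (Max A)) = G j * (\<Sum>A | A \<in> labels m \<and> Max A = j. F A)"
      by simp
  qed
  finally show ?thesis .
qed

lemma Y_step:
  assumes m: "1 \<le> m" "Suc m \<le> nn D"
  shows "Y (Suc m) = (\<Sum>A\<in>labels m. Rf m (tt D m) A * dd P D (Suc m) (Max A))"
  unfolding Y_def sum_labels_Suc[OF m(1)]
proof (intro sum.cong refl)
  fix A assume A: "A \<in> labels m"
  show "Rf (Suc m) (tt D (Suc m)) A + Rf (Suc m) (tt D (Suc m)) (insert (Suc m) A)
        = Rf m (tt D m) A * dd P D (Suc m) (Max A)"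
    unfolding Rf_step_no[OF m A] Rf_step_yes[OF m A] dd_def by (simp add: algebra_simps)
qed

lemma Y_step2:
  assumes m: "1 \<le> m" "Suc m \<le> nn D"
  shows "Y (Suc m) = (\<Sum>j = 1..m. dd P D (Suc m) j * N m j)"
  unfolding Y_step[OF m] group_Max N_def ..

lemma Y_eq_N: "Y m = (\<Sum>j = 1..m. N m j)"
  using group_Max[where F="\<lambda>A. Rf m (tt D m) A" and m=m and G="\<lambda>_. 1"] unfolding Y_def N_def by simp

lemma Y_nonneg: "k \<le> nn D \<Longrightarrow> 0 \<le> Y k"
  unfolding Y_def by (intro sum_nonneg Rf_nonneg) auto

lemma Y_zero_all:
  assumes "Y k = 0" "k \<le> nn D" "A \<in> labels k"
  shows "Rf k u A = 0"
proof -
  have "\<forall>A\<in>labels k. Rf k (tt D k) A = 0"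
    using assms(1) sum_nonneg_eq_0_iff[OF labels_fin, where f="\<lambda>A. Rf k (tt D k) A" and k1=k] Rf_nonneg assms(2)
    unfolding Y_def by auto
  then have z: "Rf k (tt D k) A = 0" using assms(3) by auto
  then have "(\<Prod>l = 1..k. fac P D A l) = 0" unfolding Rf_def by simp
  then show ?thesis unfolding Rf_def by simp
qed

lemma Y_zero_prop:
  assumes "Y m = 0" "1 \<le> m" "Suc m \<le> nn D"
  shows "Y (Suc m) = 0"
  unfolding Y_step[OF assms(2,3)] using Y_zero_all[OF assms(1)] assms by simp

lemma Y_zero_up: "Y k = 0 \<Longrightarrow> 1 \<le> k \<Longrightarrow> k \<le> j \<Longrightarrow> j \<le> nn D \<Longrightarrow> Y j = 0"
proof (induction j)
  case 0 then show ?case by simp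
next
  case (Suc j)
  show ?case
  proof (cases "k = Suc j")
    case True then show ?thesis using Suc by simp
  next
    case False
    then have "Y j = 0" using Suc by simp
    then show ?thesis using Y_zero_prop[of j] Suc False by simp
  qed
qed

lemma Lcomp_sum:
  "(\<Sum>A\<in>S. Lcomp P D Sp k u A) = ((\<Prod>l = 1..k. JJ P (mm D l)) * exp (- Phi P D Sp u k)) * (\<Sum>A\<in>S. Rf k u A)"
  unfolding Lcomp_eq sum_distrib_left ..

lemma obs_eq: "obsLik P D Sp = ((\<Prod>l = 1..nn D. JJ P (mm D l)) * exp (- Phi P D Sp (TT D) (nn D)))
    * (\<Sum>A\<in>labels (nn D). Rf (nn D) (TT D) A)"
  unfolding obsLik_def Lcomp_sum ..

lemma J_prod_nz: "(\<Prod>l = 1..nn D. JJ P (mm D l)) \<noteq> 0"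
proof
  assume z: "(\<Prod>l = 1..nn D. JJ P (mm D l)) = 0"
  have "obsLik P D Sp = 0" unfolding obs_eq z by simp
  then show False using lik_pos by simp
qed

lemma J_pos: "1 \<le> l \<Longrightarrow> l \<le> nn D \<Longrightarrow> 0 < JJ P (mm D l)"
  using J_prod_nz J_nonneg[of "mm D l"] by (auto simp: less_le)

lemma Send_sum: "(\<Sum>A\<in>labels (nn D). Rf (nn D) (TT D) A) = (\<Sum>j = 1..nn D. Send P D j * N (nn D) j)"
proof -
  have "(\<Sum>A\<in>labels (nn D). Rf (nn D) (TT D) A) = (\<Sum>A\<in>labels (nn D). Rf (nn D) (tt D (nn D)) A * Send P D (Max A))"
    using Rf_end tau_T by (intro sum.cong) auto
  then show ?thesis unfolding group_Max N_def .
qed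

lemma RT_pos: "0 < (\<Sum>A\<in>labels (nn D). Rf (nn D) (TT D) A)"
proof -
  have "(\<Sum>A\<in>labels (nn D). Rf (nn D) (TT D) A) \<noteq> 0" using lik_pos obs_eq by auto
  moreover have "0 \<le> (\<Sum>A\<in>labels (nn D). Rf (nn D) (TT D) A)"
    by (intro sum_nonneg Rf_nonneg) auto
  ultimately show ?thesis by simp
qed

lemma Yn_pos: "0 < Y (nn D)"
proof -
  have "Y (nn D) \<noteq> 0"
  proof
    assume z: "Y (nn D) = 0"
    have "(\<Sum>A\<in>labels (nn D). Rf (nn D) (TT D) A) = 0"
      using Y_zero_all[OF z] by simp
    then show False using RT_pos by simp
  qed
  then show ?thesis using Y_nonneg[of "nn D"] by simp
qed

lemma Y_pos: "1 \<le> k \<Longrightarrow> k \<le> nn D \<Longrightarrow> 0 < Y k"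
  using Y_zero_up[of k "nn D"] Yn_pos Y_nonneg[of k] by (auto simp: less_le)

lemma pp_eq:
  assumes "1 \<le> k" "k \<le> nn D"
  shows "pp P D Sp (Suc k) j = N k j / Y k"
proof -
  have "\<forall>l\<in>{1..k}. JJ P (mm D l) \<noteq> 0" using J_pos assms by (metis atLeastAtMost_iff le_trans less_irrefl)
  then have "(\<Prod>l = 1..k. JJ P (mm D l)) \<noteq> 0" by (simp add: prod_zero_iff)
  then have C: "(\<Prod>l = 1..k. JJ P (mm D l)) * exp (- Phi P D Sp (tt D k) k) \<noteq> 0" by simp
  show ?thesis unfolding pp_def diff_Suc_1 Lcomp_sum N_def Y_def
    using C by simp
qed

end

context retas2 begin

lemma Lq:
  assumes "1 \<le> m" "Suc m \<le> nn D"
  shows "(\<Sum>j = 1..Suc m - 1. pp P D Sp (Suc m) j * dd P D (Suc m) j) = Y (Suc m) / Y m"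
proof -
  have "(\<Sum>j = 1..Suc m - 1. pp P D Sp (Suc m) j * dd P D (Suc m) j)
      = (\<Sum>j = 1..m. dd P D (Suc m) j * N m j / Y m)"
    using pp_eq[of m] assms by (intro sum.cong) auto
  also have "\<dots> = Y (Suc m) / Y m" unfolding Y_step2[OF assms] sum_divide_distrib ..
  finally show ?thesis .
qed

lemma LE: "(\<Sum>j = 1..nn D. pp P D Sp (nn D + 1) j * Send P D j)
    = (\<Sum>A\<in>labels (nn D). Rf (nn D) (TT D) A) / Y (nn D)"
proof -
  have "(\<Sum>j = 1..nn D. pp P D Sp (nn D + 1) j * Send P D j) = (\<Sum>j = 1..nn D. Send P D j * N (nn D) j / Y (nn D))"
    using pp_eq[of "nn D"] n_pos by (intro sum.cong) auto
  also have "\<dots> = (\<Sum>A\<in>labels (nn D). Rf (nn D) (TT D) A) / Y (nn D)"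
    unfolding Send_sum sum_divide_distrib ..
  finally show ?thesis .
qed

lemma Y1: "Y 1 = d1 P D"
  unfolding Y_def labels_one using Rf_one by simp

lemma telescope: "1 \<le> k \<Longrightarrow> k \<le> nn D \<Longrightarrow> ln (Y k) = ln (Y 1) + (\<Sum>i = 2..k. ln (Y i / Y (i - 1)))"
proof (induction k)
  case 0 then show ?case by simp
next
  case (Suc k)
  show ?case
  proof (cases "k = 0")
    case True then show ?thesis by simp
  next
    case False
    then have k1: "1 \<le> k" by simp
    have IH: "ln (Y k) = ln (Y 1) + (\<Sum>i = 2..k. ln (Y i / Y (i - 1)))" using Suc k1 by simp
    have pos: "0 < Y k" "0 < Y (Suc k)" using Y_pos k1 Suc.prems by auto
    have "(\<Sum>i = 2..Suc k. ln (Y i / Y (i - 1))) = (\<Sum>i = 2..k. ln (Y i / Y (i - 1))) + ln (Y (Suc k) / Y k)"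
      using k1 by (simp add: sum.cl_ivl_Suc)
    then show ?thesis using IH pos by (simp add: ln_div)
  qed
qed

lemma set_restr:
  assumes "j \<le> m"
  shows "{A. A \<in> labels (Suc m) \<and> Max A = j} = {A. A \<in> labels m \<and> Max A = j}"
proof
  show "{A. A \<in> labels (Suc m) \<and> Max A = j} \<subseteq> {A. A \<in> labels m \<and> Max A = j}"
  proof
    fix A assume A: "A \<in> {A. A \<in> labels (Suc m) \<and> Max A = j}"
    then have L: "A \<in> labels (Suc m)" and M: "Max A = j" by auto
    have "x \<le> m" if "x \<in> A" for x
      using Max_ge[OF labelsD(1)[OF L] that] M assms by simp
    then have "A \<subseteq> {1..m}" using labelsD(7)[OF L] by auto
    then show "A \<in> {A. A \<in> labels m \<and> Max A = j}" using L M unfolding labels_def by auto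
  qed
next
  show "{A. A \<in> labels m \<and> Max A = j} \<subseteq> {A. A \<in> labels (Suc m) \<and> Max A = j}"
    unfolding labels_def by auto
qed

lemma N_step:
  assumes m: "1 \<le> m" "Suc m \<le> nn D" and j: "j \<le> m"
  shows "N (Suc m) j = phi P D (tt D (Suc m)) (ss D (Suc m)) * Ssurv P D (Suc m) j * N m j"
proof -
  have "N (Suc m) j = (\<Sum>A | A \<in> labels m \<and> Max A = j. Rf (Suc m) (tt D (Suc m)) A)"
    unfolding N_def set_restr[OF j] ..
  also have "\<dots> = (\<Sum>A | A \<in> labels m \<and> Max A = j. phi P D (tt D (Suc m)) (ss D (Suc m)) * Ssurv P D (Suc m) j * Rf m (tt D m) A)"
    using Rf_step_no[OF m] by (intro sum.cong) auto
  also have "\<dots> = phi P D (tt D (Suc m)) (ss D (Suc m)) * Ssurv P D (Suc m) j * N m j"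
    unfolding N_def sum_distrib_left ..
  finally show ?thesis .
qed

lemma sum_one:
  assumes "1 \<le> k" "k \<le> nn D"
  shows "(\<Sum>j = 1..k. pp P D Sp (Suc k) j) = 1"
proof -
  have "(\<Sum>j = 1..k. pp P D Sp (Suc k) j) = (\<Sum>j = 1..k. N k j / Y k)"
    using pp_eq assms by simp
  also have "\<dots> = Y k / Y k" unfolding Y_eq_N[of k] sum_divide_distrib ..
  also have "\<dots> = 1" using Y_pos[OF assms] by simp
  finally show ?thesis .
qed

end

theorem theorem1:
  fixes P :: retas_model and D :: retas_data
    and Sp :: "(real \<times> real) set" and Mg :: "real set"
  assumes n_pos: "1 \<le> nn D"
    and tau0: "tt D 0 = 0"
    and tau1_pos: "0 < tt D 1"
    and tau_mono: "\<And>i. 1 \<le> i \<Longrightarrow> i < nn D \<Longrightarrow> tt D i < tt D (Suc i)"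
    and tau_T: "tt D (nn D) \<le> TT D"
    and s_in: "\<And>i. 1 \<le> i \<Longrightarrow> i \<le> nn D \<Longrightarrow> ss D i \<in> Sp"
    and m_in: "\<And>i. 1 \<le> i \<Longrightarrow> i \<le> nn D \<Longrightarrow> mm D i \<in> Mg"
    and mu_nonneg: "\<And>t. 0 \<le> t \<Longrightarrow> 0 \<le> mu P t"
    and mu_locint: "\<And>b. mu P integrable_on {0..b}"
    and mu_renewal: "(\<lambda>t. exp (- integral {0..t} (mu P))) integrable_on {0..}"
    and nu_nonneg: "\<And>p. p \<in> Sp \<Longrightarrow> 0 \<le> nu P p"
    and nu_dens: "(nu P has_integral 1) Sp"
    and g_nonneg: "\<And>t. 0 \<le> t \<Longrightarrow> 0 \<le> gg P t"
    and g_dens: "(gg P has_integral 1) {0..}"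
    and f_nonneg: "\<And>p. 0 \<le> ff P p"
    and f_dens: "(ff P has_integral 1) UNIV"
    and kappa_nonneg: "\<And>x. 0 \<le> kap P x"
    and J_nonneg: "\<And>x. 0 \<le> JJ P x"
    and J_dens: "(JJ P has_integral 1) Mg"
    and lik_pos: "0 < obsLik P D Sp"
  shows "loglik P D Sp =
           ln (d1 P D)
         + (\<Sum>i = 2..nn D. ln (\<Sum>j = 1..i - 1. pp P D Sp i j * dd P D i j))
         + ln (\<Sum>j = 1..nn D. pp P D Sp (nn D + 1) j * Send P D j)
         - Phi P D Sp (TT D) (nn D)
         + (\<Sum>j = 1..nn D. ln (JJ P (mm D j)))
    \<and> pp P D Sp 2 1 = 1
    \<and> (\<forall>i j. 3 \<le> i \<longrightarrow> i \<le> nn D + 1 \<longrightarrow> 1 \<le> j \<longrightarrow> j \<le> i - 2 \<longrightarrow>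
           pp P D Sp i j =
             pp P D Sp (i - 1) j * phi P D (tt D (i - 1)) (ss D (i - 1)) * Ssurv P D (i - 1) j
             / (\<Sum>k = 1..i - 2. pp P D Sp (i - 1) k * dd P D (i - 1) k))
    \<and> (\<forall>i. 3 \<le> i \<longrightarrow> i \<le> nn D + 1 \<longrightarrow>
           pp P D Sp i (i - 1) = 1 - (\<Sum>k = 1..i - 2. pp P D Sp i k))"
proof -
  interpret R: retas2 P D Sp
    using n_pos tau0 tau1_pos tau_mono s_in mu_nonneg mu_locint nu_nonneg nu_dens g_nonneg
      f_nonneg kappa_nonneg tau_T J_nonneg lik_pos
    by unfold_locales auto
  define RT where "RT = (\<Sum>A\<in>labels (nn D). R.Rf (nn D) (TT D) A)"
  define E where "E = (\<Sum>j = 1..nn D. pp P D Sp (nn D + 1) j * Send P D j)"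
  have RTpos: "0 < RT" unfolding RT_def by (rule R.RT_pos)
  have Yn: "0 < R.Y (nn D)" by (rule R.Yn_pos)
  have E_eq: "E = RT / R.Y (nn D)" unfolding E_def RT_def by (rule R.LE)
  have Epos: "0 < E" unfolding E_eq using RTpos Yn by simp
  have RT_eq: "RT = R.Y (nn D) * E" unfolding E_eq using Yn by simp
  have Jpos: "\<And>l. l \<in> {1..nn D} \<Longrightarrow> 0 < JJ P (mm D l)" using R.J_pos by auto
  have Jprod_pos: "0 < (\<Prod>l = 1..nn D. JJ P (mm D l))" using Jpos by (intro prod_pos) auto
  have lnJ: "ln (\<Prod>l = 1..nn D. JJ P (mm D l)) = (\<Sum>j = 1..nn D. ln (JJ P (mm D j)))"
    by (rule ln_prod) (use Jpos in \<open>auto simp: less_le\<close>)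
  have tel: "ln (R.Y (nn D)) = ln (d1 P D) + (\<Sum>i = 2..nn D. ln (R.Y i / R.Y (i - 1)))"
    using R.telescope[OF n_pos order.refl] R.Y1 by simp
  have sums: "(\<Sum>i = 2..nn D. ln (\<Sum>j = 1..i - 1. pp P D Sp i j * dd P D i j))
      = (\<Sum>i = 2..nn D. ln (R.Y i / R.Y (i - 1)))"
  proof (intro sum.cong refl)
    fix i assume i: "i \<in> {2..nn D}"
    then have ii: "Suc (i - 1) = i" "1 \<le> i - 1" "Suc (i - 1) \<le> nn D" by auto
    have "(\<Sum>j = 1..Suc (i - 1) - 1. pp P D Sp (Suc (i - 1)) j * dd P D (Suc (i - 1)) j)
        = R.Y (Suc (i - 1)) / R.Y (i - 1)"
      by (rule R.Lq[OF ii(2,3)])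
    then show "ln (\<Sum>j = 1..i - 1. pp P D Sp i j * dd P D i j) = ln (R.Y i / R.Y (i - 1))"
      unfolding ii(1) by simp
  qed
  have part1: "loglik P D Sp =
           ln (d1 P D)
         + (\<Sum>i = 2..nn D. ln (\<Sum>j = 1..i - 1. pp P D Sp i j * dd P D i j))
         + ln (\<Sum>j = 1..nn D. pp P D Sp (nn D + 1) j * Send P D j)
         - Phi P D Sp (TT D) (nn D)
         + (\<Sum>j = 1..nn D. ln (JJ P (mm D j)))"
  proof -
    have "loglik P D Sp = ln (((\<Prod>l = 1..nn D. JJ P (mm D l)) * exp (- Phi P D Sp (TT D) (nn D)))
        * (R.Y (nn D) * E))"
      unfolding loglik_def R.obs_eq RT_def[symmetric] RT_eq ..
    also have "\<dots> = ln (\<Prod>l = 1..nn D. JJ P (mm D l)) + (- Phi P D Sp (TT D) (nn D))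
        + (ln (R.Y (nn D)) + ln E)"
    proof -
      define JP where "JP = (\<Prod>l = 1..nn D. JJ P (mm D l))"
      have "JP > 0" using Jprod_pos JP_def by simp
      then have "ln ((JP * exp (- Phi P D Sp (TT D) (nn D))) * (R.Y (nn D) * E))
          = ln JP + (- Phi P D Sp (TT D) (nn D)) + (ln (R.Y (nn D)) + ln E)"
        using Yn Epos by (simp add: ln_mult)
      then show ?thesis unfolding JP_def .
    qed
    finally show ?thesis unfolding lnJ tel sums E_def by simp
  qed
  have part2: "pp P D Sp 2 1 = 1"
    using R.sum_one[OF order.refl n_pos] by (simp add: numeral_2_eq_2)
  have part3: "\<forall>i j. 3 \<le> i \<longrightarrow> i \<le> nn D + 1 \<longrightarrow> 1 \<le> j \<longrightarrow> j \<le> i - 2 \<longrightarrow>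
           pp P D Sp i j =
             pp P D Sp (i - 1) j * phi P D (tt D (i - 1)) (ss D (i - 1)) * Ssurv P D (i - 1) j
             / (\<Sum>k = 1..i - 2. pp P D Sp (i - 1) k * dd P D (i - 1) k)"
  proof (intro allI impI)
    fix i j assume i: "3 \<le> i" "i \<le> nn D + 1" and j: "1 \<le> j" "j \<le> i - 2"
    define m where "m = i - 2"
    have im: "i = Suc (Suc m)" using i m_def by simp
    have m: "1 \<le> m" "Suc m \<le> nn D" using i im by auto
    have jm: "j \<le> m" using j m_def by simp
    have Ym: "0 < R.Y m" "0 < R.Y (Suc m)" using R.Y_pos m by auto
    have L: "(\<Sum>k = 1..m. pp P D Sp (Suc m) k * dd P D (Suc m) k) = R.Y (Suc m) / R.Y m"
      using R.Lq[OF m] by simp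
    have "pp P D Sp i j = R.N (Suc m) j / R.Y (Suc m)"
      unfolding im by (rule R.pp_eq) (use m in auto)
    also have "\<dots> = phi P D (tt D (Suc m)) (ss D (Suc m)) * Ssurv P D (Suc m) j * R.N m j / R.Y (Suc m)"
      unfolding R.N_step[OF m jm] ..
    also have "\<dots> = (R.N m j / R.Y m) * phi P D (tt D (Suc m)) (ss D (Suc m)) * Ssurv P D (Suc m) j
        / (R.Y (Suc m) / R.Y m)"
      using Ym by (simp add: field_simps)
    also have "\<dots> = pp P D Sp (Suc m) j * phi P D (tt D (Suc m)) (ss D (Suc m)) * Ssurv P D (Suc m) j
        / (\<Sum>k = 1..m. pp P D Sp (Suc m) k * dd P D (Suc m) k)"
      by (subst L) (simp only: R.pp_eq[OF m(1) Suc_leD[OF m(2)]])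
    finally show "pp P D Sp i j =
             pp P D Sp (i - 1) j * phi P D (tt D (i - 1)) (ss D (i - 1)) * Ssurv P D (i - 1) j
             / (\<Sum>k = 1..i - 2. pp P D Sp (i - 1) k * dd P D (i - 1) k)"
      unfolding im by simp
  qed
  have part4: "\<forall>i. 3 \<le> i \<longrightarrow> i \<le> nn D + 1 \<longrightarrow>
           pp P D Sp i (i - 1) = 1 - (\<Sum>k = 1..i - 2. pp P D Sp i k)"
  proof (intro allI impI)
    fix i assume i: "3 \<le> i" "i \<le> nn D + 1"
    define m where "m = i - 2"
    have im: "i = Suc (Suc m)" using i m_def by simp
    have m: "1 \<le> Suc m" "Suc m \<le> nn D" using i im by auto
    have "(\<Sum>k = 1..Suc m. pp P D Sp (Suc (Suc m)) k) = 1" by (rule R.sum_one[OF m])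
    then have "(\<Sum>k = 1..m. pp P D Sp (Suc (Suc m)) k) + pp P D Sp (Suc (Suc m)) (Suc m) = 1"
      by (simp add: sum.cl_ivl_Suc)
    then show "pp P D Sp i (i - 1) = 1 - (\<Sum>k = 1..i - 2. pp P D Sp i k)"
      unfolding im by simp
  qed
  show ?thesis using part1 part2 part3 part4 by blast
qed

end
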